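(* Let $n\ge2$, let $p>2$ be prime, $M=(p-1)/2$, and $\delta>0$. Let $z_j^{(i)}$, $\tilde z_j^{(i)}\in\mathbb{Q}_{(M,\delta)}$ (for $i\in\{1,2\}$, $j\in\{1,\dots,n\}$) and $\tilde r=\frac{1}{n-1}\sum_{j=1}^n\tilde z_j^{(1)}\tilde z_j^{(2)}$ be as in the context. Suppose $R\in\mathbb{R}$ satisfies $|\tilde z_j^{(i)}|\le R$ for all $i,j$, and $R\le n/\delta$. If $M\ge\frac{n-1}{\delta^2}+n\left(\frac{R}{\delta}+\frac14\right)$, then $$\tilde r=\frac{1}{n-1}\,\varphi_{\delta^2}^{-1}\Big(\sum_{j=1}^n\varphi_\delta(\tilde z_j^{(1)})\,\varphi_\delta(\tilde z_j^{(2)})\Big),$$ where the sum and products inside $\varphi_{\delta^2}^{-1}$ are computed in $\mathbb{F}_p$.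
   Context: For $\gamma>0$, $\mathbb{Q}_{(M,\gamma)}=\{x\gamma: x\in\mathbb{Z},\ -M\le x\le M\}$ and $\varphi_\gamma:\mathbb{Q}_{(M,\gamma)}\to\mathbb{F}_p$, $\varphi_\gamma(x\gamma)=x\bmod p$; with $M=(p-1)/2$ this is a bijection with inverse $\varphi_\gamma^{-1}(y)=\gamma\psi(y)$, where, representing $y$ by an integer in $\{0,\dots,p-1\}$, $\psi(y)=y$ if $y\le M$ and $\psi(y)=y-p$ otherwise. For $i=1,2$, $x_1^{(i)},\dots,x_n^{(i)}$ are real samples (not all equal) with mean $\bar x^{(i)}$, $s^{(i)}=\sqrt{\frac{1}{n-1}\sum_j(x_j^{(i)}-\bar x^{(i)})^2}$, and $z_j^{(i)}=(x_j^{(i)}-\bar x^{(i)})/s^{(i)}$; $\tilde z_j^{(i)}$ is a nearest element of $\mathbb{Q}_{(M,\delta)}$ to $z_j^{(i)}$, with $|z_j^{(i)}-\tilde z_j^{(i)}|\le\delta/2$. *)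

theory Defs
  imports Complex_Main "HOL-Computational_Algebra.Primes"
begin

definition Qset :: "int \<Rightarrow> real \<Rightarrow> real set" where
  "Qset M \<gamma> = {of_int x * \<gamma> | x. - M \<le> x \<and> x \<le> M}"

text \<open>F_p is represented by the integers {0..p-1}, arithmetic mod p.
  phi_gamma(x*gamma) = x mod p.\<close>
definition phi :: "int \<Rightarrow> int \<Rightarrow> real \<Rightarrow> real \<Rightarrow> int" where
  "phi p M \<gamma> q = (THE x. - M \<le> x \<and> x \<le> M \<and> q = of_int x * \<gamma>) mod p"

text \<open>psi on representatives y in {0..p-1}.\<close>
definition psi :: "int \<Rightarrow> int \<Rightarrow> int \<Rightarrow> int" where
  "psi p M y = (if y \<le> M then y else y - p)"

definition phi_inv :: "int \<Rightarrow> int \<Rightarrow> real \<Rightarrow> int \<Rightarrow> real" where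
  "phi_inv p M \<gamma> y = \<gamma> * of_int (psi p M y)"

definition mean :: "nat \<Rightarrow> (nat \<Rightarrow> real) \<Rightarrow> real" where
  "mean n x = (\<Sum>j=1..n. x j) / real n"

definition sdev :: "nat \<Rightarrow> (nat \<Rightarrow> real) \<Rightarrow> real" where
  "sdev n x = sqrt ((1 / (real n - 1)) * (\<Sum>j=1..n. (x j - mean n x)\<^sup>2))"

definition zscore :: "nat \<Rightarrow> (nat \<Rightarrow> real) \<Rightarrow> nat \<Rightarrow> real" where
  "zscore n x j = (x j - mean n x) / sdev n x"

end

theory Submission
  imports Defs
begin

lemma zsq_sum:
  fixes n :: nat and y :: "nat \<Rightarrow> real"
  assumes n2: "n \<ge> 2" and nc: "\<exists>j\<in>{1..n}. \<exists>k\<in>{1..n}. y j \<noteq> y k"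
  shows "(\<Sum>j=1..n. (zscore n y j)\<^sup>2) = real n - 1"
proof -
  define m where "m = mean n y"
  define S where "S = (\<Sum>j=1..n. (y j - m)\<^sup>2)"
  have S0: "S \<ge> 0" unfolding S_def by (simp add: sum_nonneg)
  have Sne: "S \<noteq> 0"
  proof
    assume "S = 0"
    then have "\<forall>j\<in>{1..n}. (y j - m)\<^sup>2 = 0" unfolding S_def
      by (subst (asm) sum_nonneg_eq_0_iff) auto
    then have "\<forall>j\<in>{1..n}. y j = m" by auto
    with nc show False by auto
  qed
  have n1: "real n - 1 > 0" using n2 by simp
  have sd: "(sdev n y)\<^sup>2 = S / (real n - 1)"
    unfolding sdev_def S_def[symmetric] m_def[symmetric] using S0 n1 by simp
  have "(\<Sum>j=1..n. (zscore n y j)\<^sup>2) = (\<Sum>j=1..n. (y j - m)\<^sup>2 / (sdev n y)\<^sup>2)"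
    unfolding zscore_def m_def by (simp add: power_divide)
  also have "\<dots> = S / (sdev n y)\<^sup>2" unfolding S_def by (simp add: sum_divide_distrib)
  also have "\<dots> = real n - 1" using sd Sne n1 by simp
  finally show ?thesis .
qed

lemma psi_recover:
  fixes p M T :: int
  assumes "M = (p - 1) div 2" "p > 2" "odd p" "\<bar>T\<bar> \<le> M"
  shows "psi p M (T mod p) = T"
proof -
  have p: "p = 2*M + 1" using assms(1,3) by presburger
  have TM: "\<bar>T\<bar> \<le> M" by (rule assms(4))
  show ?thesis
  proof (cases "T \<ge> 0")
    case True
    then have "T mod p = T" using TM p by (intro mod_pos_pos_trivial) auto
    then show ?thesis unfolding psi_def using TM by simp
  next
    case False
    have "(T + p) mod p = T + p" using TM p False by (intro mod_pos_pos_trivial) auto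
    then have "T mod p = T + p" by simp
    then show ?thesis unfolding psi_def using TM p False by simp
  qed
qed

theorem lemma3:
  fixes n p :: nat and M :: int and \<delta> R :: real
    and x :: "nat \<Rightarrow> nat \<Rightarrow> real" and zt :: "nat \<Rightarrow> nat \<Rightarrow> real"
  assumes n2: "n \<ge> 2"
    and pprime: "prime p" and p2: "p > 2"
    and Mdef: "M = (int p - 1) div 2"
    and dpos: "\<delta> > 0"
    and notconst: "\<And>i. i \<in> {1,2} \<Longrightarrow> \<exists>j\<in>{1..n}. \<exists>k\<in>{1..n}. x i j \<noteq> x i k"
    and ztQ: "\<And>i j. i \<in> {1,2} \<Longrightarrow> j \<in> {1..n} \<Longrightarrow> zt i j \<in> Qset M \<delta>"
    and nearest: "\<And>i j q. i \<in> {1,2} \<Longrightarrow> j \<in> {1..n} \<Longrightarrow> q \<in> Qset M \<delta> \<Longrightarrow>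
                    \<bar>zscore n (x i) j - zt i j\<bar> \<le> \<bar>zscore n (x i) j - q\<bar>"
    and close: "\<And>i j. i \<in> {1,2} \<Longrightarrow> j \<in> {1..n} \<Longrightarrow> \<bar>zscore n (x i) j - zt i j\<bar> \<le> \<delta> / 2"
    and Rbound: "\<And>i j. i \<in> {1,2} \<Longrightarrow> j \<in> {1..n} \<Longrightarrow> \<bar>zt i j\<bar> \<le> R"
    and Rle: "R \<le> real n / \<delta>"
    and Mbig: "real_of_int M \<ge> (real n - 1) / \<delta>\<^sup>2 + real n * (R / \<delta> + 1 / 4)"
  shows "(1 / (real n - 1)) * (\<Sum>j=1..n. zt 1 j * zt 2 j)
         = (1 / (real n - 1)) * phi_inv (int p) M (\<delta>\<^sup>2)
             ((\<Sum>j=1..n. phi (int p) M \<delta> (zt 1 j) * phi (int p) M \<delta> (zt 2 j)) mod int p)"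
proof -
  define z where "z i j = zscore n (x i) j" for i j
  define a where "a i j = (THE k. - M \<le> k \<and> k \<le> M \<and> zt i j = of_int k * \<delta>)" for i j
  have aprop: "- M \<le> a i j \<and> a i j \<le> M \<and> zt i j = of_int (a i j) * \<delta>"
    if ij: "i \<in> {1,2}" "j \<in> {1..n}" for i j
  proof -
    obtain k where k: "- M \<le> k \<and> k \<le> M \<and> zt i j = of_int k * \<delta>"
      using ztQ[OF ij] unfolding Qset_def by auto
    have "\<And>k'. - M \<le> k' \<and> k' \<le> M \<and> zt i j = of_int k' * \<delta> \<Longrightarrow> k' = k"
      using k dpos by auto
    then have "a i j = k" unfolding a_def using k by (intro the_equality) auto
    then show ?thesis using k by simp
  qed
  have phia: "phi (int p) M \<delta> (zt i j) = a i j mod int p"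
    if "i \<in> {1,2}" "j \<in> {1..n}" for i j
    unfolding phi_def a_def by simp
  define T where "T = (\<Sum>j=1..n. a 1 j * a 2 j)"
  have sumeq: "(\<Sum>j=1..n. zt 1 j * zt 2 j) = \<delta>\<^sup>2 * of_int T"
    unfolding T_def of_int_sum sum_distrib_left
    by (rule sum.cong) (auto simp: aprop power2_eq_square)
  have modeq: "(\<Sum>j=1..n. phi (int p) M \<delta> (zt 1 j) * phi (int p) M \<delta> (zt 2 j)) mod int p
      = T mod int p"
  proof -
    have "(\<Sum>j=1..n. phi (int p) M \<delta> (zt 1 j) * phi (int p) M \<delta> (zt 2 j))
        = (\<Sum>j=1..n. (a 1 j mod int p) * (a 2 j mod int p))"
      by (rule sum.cong) (auto simp: phia)
    also have "\<dots> mod int p = (\<Sum>j=1..n. ((a 1 j mod int p) * (a 2 j mod int p)) mod int p) mod int p"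
      by (simp add: mod_sum_eq)
    also have "\<dots> = (\<Sum>j=1..n. (a 1 j * a 2 j) mod int p) mod int p"
      by (simp add: mod_mult_eq)
    also have "\<dots> = T mod int p" unfolding T_def by (simp add: mod_sum_eq)
    finally show ?thesis .
  qed
  have n1: "real n - 1 > 0" using n2 by simp
  have z1: "(\<Sum>j=1..n. (z 1 j)\<^sup>2) = real n - 1" unfolding z_def
    by (rule zsq_sum[OF n2 notconst]) simp
  have z2: "(\<Sum>j=1..n. (z 2 j)\<^sup>2) = real n - 1" unfolding z_def
    by (rule zsq_sum[OF n2 notconst]) simp
  have cs: "\<bar>\<Sum>j=1..n. z 1 j * z 2 j\<bar> \<le> real n - 1"
  proof -
    have "\<bar>\<Sum>j=1..n. z 1 j * z 2 j\<bar> \<le> (\<Sum>j=1..n. \<bar>z 1 j * z 2 j\<bar>)" by (rule sum_abs)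
    also have "\<dots> \<le> (\<Sum>j=1..n. ((z 1 j)\<^sup>2 + (z 2 j)\<^sup>2) / 2)"
    proof (rule sum_mono)
      fix j
      have "0 \<le> (\<bar>z 1 j\<bar> - \<bar>z 2 j\<bar>)\<^sup>2" by simp
      then show "\<bar>z 1 j * z 2 j\<bar> \<le> ((z 1 j)\<^sup>2 + (z 2 j)\<^sup>2) / 2"
        by (simp add: power2_eq_square abs_mult algebra_simps)
    qed
    also have "\<dots> = real n - 1" using z1 z2
      by (simp add: sum_divide_distrib[symmetric] sum.distrib)
    finally show ?thesis .
  qed
  define c where "c = (\<delta>/2) * (R + \<delta>/2) + R * (\<delta>/2)"
  have pw: "\<bar>zt 1 j * zt 2 j - z 1 j * z 2 j\<bar> \<le> c" if j: "j \<in> {1..n}" for j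
  proof -
    define e1 where "e1 = z 1 j - zt 1 j"
    define e2 where "e2 = z 2 j - zt 2 j"
    have he1: "\<bar>e1\<bar> \<le> \<delta>/2" using close[of 1 j] j unfolding e1_def z_def by simp
    have he2: "\<bar>e2\<bar> \<le> \<delta>/2" using close[of 2 j] j unfolding e2_def z_def by simp
    have r1: "\<bar>zt 1 j\<bar> \<le> R" using Rbound[of 1 j] j by simp
    have r2: "\<bar>zt 2 j\<bar> \<le> R" using Rbound[of 2 j] j by simp
    have hz2: "\<bar>z 2 j\<bar> \<le> R + \<delta>/2" using r2 he2 unfolding e2_def by linarith
    have "zt 1 j * zt 2 j - z 1 j * z 2 j = - e1 * z 2 j - zt 1 j * e2"
      unfolding e1_def e2_def by (simp add: algebra_simps)
    then have "\<bar>zt 1 j * zt 2 j - z 1 j * z 2 j\<bar> \<le> \<bar>e1\<bar> * \<bar>z 2 j\<bar> + \<bar>zt 1 j\<bar> * \<bar>e2\<bar>"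
      by (simp add: abs_mult[symmetric])
    also have "\<dots> \<le> (\<delta>/2) * (R + \<delta>/2) + R * (\<delta>/2)"
      by (intro add_mono mult_mono) (use he1 hz2 r1 he2 dpos in auto)
    finally show ?thesis unfolding c_def .
  qed
  have diff: "\<bar>(\<Sum>j=1..n. zt 1 j * zt 2 j) - (\<Sum>j=1..n. z 1 j * z 2 j)\<bar> \<le> real n * c"
  proof -
    have "\<bar>(\<Sum>j=1..n. zt 1 j * zt 2 j) - (\<Sum>j=1..n. z 1 j * z 2 j)\<bar>
        = \<bar>\<Sum>j=1..n. zt 1 j * zt 2 j - z 1 j * z 2 j\<bar>" by (simp add: sum_subtractf)
    also have "\<dots> \<le> (\<Sum>j=1..n. \<bar>zt 1 j * zt 2 j - z 1 j * z 2 j\<bar>)" by (rule sum_abs)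
    also have "\<dots> \<le> (\<Sum>j=1..n. c)" by (rule sum_mono) (rule pw)
    finally show ?thesis by simp
  qed
  have bnd: "\<delta>\<^sup>2 * \<bar>of_int T\<bar> \<le> (real n - 1) + real n * c"
  proof -
    have "\<delta>\<^sup>2 * \<bar>of_int T\<bar> = \<bar>\<Sum>j=1..n. zt 1 j * zt 2 j\<bar>"
      unfolding sumeq by (simp add: abs_mult)
    also have "\<dots> \<le> (real n - 1) + real n * c" using diff cs by linarith
    finally show ?thesis .
  qed
  have "(real n - 1) + real n * c = \<delta>\<^sup>2 * ((real n - 1) / \<delta>\<^sup>2 + real n * (R / \<delta> + 1 / 4))"
    unfolding c_def using dpos by (simp add: field_simps power2_eq_square)
  also have "\<dots> \<le> \<delta>\<^sup>2 * real_of_int M" using Mbig dpos by simp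
  finally have "\<delta>\<^sup>2 * \<bar>of_int T\<bar> \<le> \<delta>\<^sup>2 * real_of_int M" using bnd by linarith
  then have "\<bar>real_of_int T\<bar> \<le> real_of_int M" using dpos by simp
  then have TM: "\<bar>T\<bar> \<le> M" by linarith
  have oddp: "odd (int p)" using pprime p2
    using prime_odd_nat[of p] by simp
  have "psi (int p) M (T mod int p) = T"
    using psi_recover[OF Mdef _ oddp TM] p2 by simp
  then show ?thesis unfolding phi_inv_def modeq sumeq by simp
qed

end
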